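(* Let $X$ be an absolutely continuous non-negative random variable whose density $f$ is supported on $[0,\nu]$ with $\nu<\infty$, and let $\mu=\mathrm{E}(X)$, assumed to be positive. Then $$H^w\le \mu\log\frac{\nu^2}{2\mu}.$$ Moreover, equality holds if $X$ is uniformly distributed on $[0,\nu]$.
   Context: The weighted entropy of $X$ with density $f$ is $H^w=-\mathrm{E}[X\log f(X)]=-\int_0^{\infty}x\,f(x)\log f(x)\,dx$, with $\log$ the natural logarithm. *)

theory Defs
  imports "HOL-Analysis.Analysis"
begin

definition is_density :: "(real \<Rightarrow> real) \<Rightarrow> bool" where
  "is_density f \<longleftrightarrow> f \<in> borel_measurable lborel \<and> (\<forall>x. 0 \<le> f x) \<and>
     integrable lborel f \<and> (\<integral>x. f x \<partial>lborel) = 1"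

definition dens_mean :: "(real \<Rightarrow> real) \<Rightarrow> real" where
  "dens_mean f = (\<integral>x. x * f x \<partial>lborel)"

text \<open>Weighted entropy H^w = - E[X log f(X)] = - int x f(x) log f(x) dx
  (natural logarithm; convention 0 log 0 = 0, which matches ln 0 = 0).\<close>
definition weighted_entropy :: "(real \<Rightarrow> real) \<Rightarrow> real" where
  "weighted_entropy f = - (\<integral>x. x * f x * ln (f x) \<partial>lborel)"

end

theory Submission
  imports Defs
begin

lemma int_x_ind:
  assumes "0 \<le> (v::real)"
  shows "integrable lborel (\<lambda>x. indicator {0..v} x *\<^sub>R x)"
    and "(\<integral>x. indicator {0..v} x *\<^sub>R x \<partial>lborel) = v\<^sup>2 / 2"
proof -
  show "integrable lborel (\<lambda>x. indicator {0..v} x *\<^sub>R x)"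
    using borel_integrable_atLeastAtMost[of 0 v "\<lambda>x. x"] by (simp add: mult.commute)
  have "(\<integral>x. indicator {0..v} x *\<^sub>R x \<partial>lborel) = (\<lambda>x. x\<^sup>2/2) v - (\<lambda>x. x\<^sup>2/2) 0"
    by (rule integral_FTC_atLeastAtMost[OF assms])
       (auto intro!: derivative_eq_intros continuous_intros simp: has_real_derivative_iff_has_vector_derivative[symmetric])
  then show "(\<integral>x. indicator {0..v} x *\<^sub>R x \<partial>lborel) = v\<^sup>2 / 2" by simp
qed

theorem mainTheorem2:
  fixes f :: "real \<Rightarrow> real" and \<nu> :: real
  assumes dens: "is_density f"
    and supp: "\<And>x. x \<notin> {0..\<nu>} \<Longrightarrow> f x = 0"
    and mean_int: "integrable lborel (\<lambda>x. x * f x)"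
    and mean_pos: "dens_mean f > 0"
    and Hw_int: "integrable lborel (\<lambda>x. x * f x * ln (f x))"
  shows "weighted_entropy f \<le> dens_mean f * ln (\<nu>\<^sup>2 / (2 * dens_mean f)) \<and>
         ((AE x in lborel. f x = indicator {0..\<nu>} x / \<nu>) \<longrightarrow>
           weighted_entropy f = dens_mean f * ln (\<nu>\<^sup>2 / (2 * dens_mean f)))"
proof -
  define \<mu> where "\<mu> = dens_mean f"
  have fnn: "\<And>x. 0 \<le> f x" using dens unfolding is_density_def by auto
  have nupos: "\<nu> > 0"
  proof (rule ccontr)
    assume "\<not> \<nu> > 0"
    then have "\<And>x. x * f x = 0" using supp by (metis atLeastAtMost_iff mult_eq_0_iff order_trans linorder_not_less order_antisym)
    then have "(\<lambda>x. x * f x) = (\<lambda>x. 0)" by (rule ext)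
    then have "dens_mean f = 0" unfolding dens_mean_def by (simp only:) simp
    then show False using mean_pos by simp
  qed
  have mupos: "\<mu> > 0" using mean_pos \<mu>_def by simp
  define c where "c = 2 * \<mu> / \<nu>\<^sup>2"
  have cpos: "c > 0" using mupos nupos by (simp add: c_def)
  note I = int_x_ind[of \<nu>]
  have pw: "- (x * f x * ln (f x)) \<le> c * (indicator {0..\<nu>} x *\<^sub>R x) - x * f x - ln c * (x * f x)" for x
  proof (cases "f x = 0")
    case True
    then show ?thesis using cpos by (auto simp: indicator_def)
  next
    case False
    then have fp: "f x > 0" using fnn[of x] by simp
    have xin: "x \<in> {0..\<nu>}" using supp False by blast
    have "ln (c / f x) \<le> c / f x - 1" using ln_le_minus_one cpos fp by simp
    moreover have "ln (c / f x) = ln c - ln (f x)" using cpos fp by (simp add: ln_div)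
    ultimately have "ln c - ln (f x) \<le> c / f x - 1" by simp
    then have "x * f x * (ln c - ln (f x)) \<le> x * f x * (c / f x - 1)"
      using xin fp by (intro mult_left_mono) auto
    then show ?thesis using xin fp by (simp add: algebra_simps indicator_def)
  qed
  have ineq: "(\<integral>x. - (x * f x * ln (f x)) \<partial>lborel) \<le>
     (\<integral>x. c * (indicator {0..\<nu>} x *\<^sub>R x) - x * f x - ln c * (x * f x) \<partial>lborel)"
    by (rule integral_mono) (use Hw_int mean_int I nupos pw in auto)
  also have "\<dots> = c * (\<nu>\<^sup>2/2) - \<mu> - ln c * \<mu>"
    using Hw_int mean_int I nupos unfolding \<mu>_def dens_mean_def by simp
  also have "\<dots> = \<mu> * ln (\<nu>\<^sup>2 / (2 * \<mu>))"
    using nupos mupos unfolding c_def by (simp add: ln_div field_simps)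
  finally have part1: "weighted_entropy f \<le> \<mu> * ln (\<nu>\<^sup>2 / (2 * \<mu>))"
    unfolding weighted_entropy_def by simp
  have part2: "weighted_entropy f = \<mu> * ln (\<nu>\<^sup>2 / (2 * \<mu>))"
    if ae: "AE x in lborel. f x = indicator {0..\<nu>} x / \<nu>"
  proof -
    have m: "\<mu> = \<nu> / 2"
    proof -
      have "\<mu> = (\<integral>x. (1/\<nu>) * (indicator {0..\<nu>} x *\<^sub>R x) \<partial>lborel)"
        unfolding \<mu>_def dens_mean_def
        by (rule integral_cong_AE) (use ae mean_int in \<open>auto elim!: eventually_mono simp: indicator_def\<close>)
      also have "\<dots> = \<nu> / 2" using I nupos by (simp add: power2_eq_square)
      finally show ?thesis .
    qed
    have "weighted_entropy f = - (\<integral>x. (ln (1/\<nu>) / \<nu>) * (indicator {0..\<nu>} x *\<^sub>R x) \<partial>lborel)"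
      unfolding weighted_entropy_def
      by (subst integral_cong_AE[where g="\<lambda>x. (ln (1/\<nu>) / \<nu>) * (indicator {0..\<nu>} x *\<^sub>R x)"])
         (use ae Hw_int in \<open>auto elim!: eventually_mono simp: indicator_def\<close>)
    also have "\<dots> = \<nu> / 2 * ln \<nu>" using nupos
      by (simp only: integral_mult_right_zero I(2)[OF less_imp_le[OF nupos]]) (simp add: power2_eq_square ln_div)
    also have "\<dots> = \<mu> * ln (\<nu>\<^sup>2 / (2 * \<mu>))" unfolding m using nupos by (simp add: power2_eq_square)
    finally show ?thesis .
  qed
  show ?thesis using part1 part2 unfolding \<mu>_def by blast
qed

end
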